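(* For all natural numbers $n\geq 1$, \[a_3(n)=3p(n)-p(n+1)-2p(n+2)+p(n+3).\]
   Context: $p(n)$ denotes the number of partitions of $n$. $a_3(n)$ denotes the number of partitions of $n$ in which the smallest part occurs at least $3$ times. *)

theory Defs
  imports Main "HOL-Library.Multiset"
begin

definition partitions :: "nat \<Rightarrow> nat multiset set" where
  "partitions n = {M. (\<forall>x\<in>#M. 0 < x) \<and> sum_mset M = n}"

definition p :: "nat \<Rightarrow> nat" where
  "p n = card (partitions n)"

definition a3 :: "nat \<Rightarrow> nat" where
  "a3 n = card {M \<in> partitions n. M \<noteq> {#} \<and> count M (Min (set_mset M)) \<ge> 3}"

end

theory Submission
  imports Defs
begin


lemma size_le_sum: "(\<forall>x\<in>#M. 0 < (x::nat)) \<Longrightarrow> size M \<le> sum_mset M"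
  by (induction M) auto

lemma mem_le_sum: "(x::nat) \<in># M \<Longrightarrow> x \<le> sum_mset M"
  by (induction M) auto

lemma finite_partitions: "finite (partitions n)"
proof -
  have "partitions n \<subseteq> (\<Union>s\<in>{0..n}. multisets_of_size {0..n} s)"
  proof
    fix M assume "M \<in> partitions n"
    then have a: "\<forall>x\<in>#M. 0 < x" "sum_mset M = n" by (auto simp: partitions_def)
    then have "size M \<le> n" using size_le_sum by metis
    moreover have "set_mset M \<subseteq> {0..n}" using a mem_le_sum by fastforce
    ultimately show "M \<in> (\<Union>s\<in>{0..n}. multisets_of_size {0..n} s)"
      by (auto simp: multisets_of_size_def)
  qed
  then show ?thesis by (rule finite_subset) auto
qed

definition Qs :: "nat \<Rightarrow> nat \<Rightarrow> nat multiset set" where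
  "Qs m j = {M \<in> partitions j. \<forall>x\<in>#M. m \<le> x}"

definition Q :: "nat \<Rightarrow> nat \<Rightarrow> nat" where
  "Q m j = card (Qs m j)"

lemma finite_Qs: "finite (Qs m j)"
  unfolding Qs_def using finite_partitions by auto

lemma Q1: "Q 1 n = p n"
proof -
  have "Qs 1 n = partitions n" by (auto simp: Qs_def partitions_def Suc_le_eq)
  then show ?thesis by (simp add: Q_def p_def)
qed

lemma Q1' [simp]: "Q (Suc 0) n = p n" using Q1 by simp

lemma Q_big: assumes "n < m" "1 \<le> n" shows "Q m n = 0"
proof -
  have "Qs m n = {}"
  proof (rule ccontr)
    assume "Qs m n \<noteq> {}"
    then obtain M where M: "M \<in> partitions n" "\<forall>x\<in>#M. m \<le> x" by (auto simp: Qs_def)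
    then have "M \<noteq> {#}" using assms by (auto simp: partitions_def)
    then obtain x where "x \<in># M" by blast
    then show False using M mem_le_sum[of x M] assms by (auto simp: partitions_def)
  qed
  then show ?thesis by (simp add: Q_def)
qed

lemma Q_rec: assumes "1 \<le> m"
  shows "Q m j = Q (Suc m) j + (if m \<le> j then Q m (j - m) else 0)"
proof -
  let ?B = "{M \<in> Qs m j. m \<in># M}"
  have un: "Qs m j = Qs (Suc m) j \<union> ?B" 
    by (auto simp: Qs_def Suc_le_eq order.order_iff_strict)
  have dis: "Qs (Suc m) j \<inter> ?B = {}" by (auto simp: Qs_def)
  have cB: "card ?B = (if m \<le> j then Q m (j - m) else 0)"
  proof (cases "m \<le> j")
    case True
    have "bij_betw (\<lambda>M. M - {#m#}) ?B (Qs m (j - m))"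
    proof (rule bij_betw_byWitness[where f'="\<lambda>N. add_mset m N"])
      show "\<forall>a\<in>?B. add_mset m (a - {#m#}) = a" by auto
      show "\<forall>a'\<in>Qs m (j - m). add_mset m a' - {#m#} = a'" by auto
      show "(\<lambda>M. M - {#m#}) ` ?B \<subseteq> Qs m (j - m)"
      proof
        fix N assume "N \<in> (\<lambda>M. M - {#m#}) ` ?B"
        then obtain M where M: "M \<in> ?B" "N = M - {#m#}" by blast
        then have "M = add_mset m N" by auto
        then show "N \<in> Qs m (j - m)" using M(1) 
          by (auto simp: Qs_def partitions_def dest: in_diffD)
      qed
      show "add_mset m ` Qs m (j - m) \<subseteq> ?B"
        using True assms by (auto simp: Qs_def partitions_def)
    qed
    then show ?thesis using True by (simp add: Q_def bij_betw_same_card)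
  next
    case False
    have e: "?B = {}" using False 
      by (auto simp: Qs_def partitions_def dest!: mem_le_sum)
    show ?thesis unfolding e using False by simp
  qed
  have "card (Qs m j) = card (Qs (Suc m) j \<union> ?B)" using un by (rule arg_cong)
  also have "\<dots> = card (Qs (Suc m) j) + card ?B"
    by (rule card_Un_disjoint) (use finite_Qs dis in auto)
  finally have c: "card (Qs m j) = card (Qs (Suc m) j) + card ?B" .
  show ?thesis unfolding Q_def using c cB[unfolded Q_def] by linarith
qed


lemma a3_sum: "a3 n = (\<Sum>m=1..n+1. if 3*m \<le> n then Q m (n - 3*m) else 0)"
proof -
  define A where "A = {M \<in> partitions n. M \<noteq> {#} \<and> count M (Min (set_mset M)) \<ge> 3}"
  define Am where "Am m = {M \<in> A. Min (set_mset M) = m}" for m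
  have finA: "finite A" unfolding A_def using finite_partitions by auto
  have un: "A = (\<Union>m\<in>{1..n+1}. Am m)"
  proof
    show "A \<subseteq> (\<Union>m\<in>{1..n+1}. Am m)"
    proof
      fix M assume M: "M \<in> A"
      then have ne: "M \<noteq> {#}" and pos: "\<forall>x\<in>#M. 0 < x" and s: "sum_mset M = n"
        by (auto simp: A_def partitions_def)
      have mem: "Min (set_mset M) \<in># M" using ne by (simp add: Min_in)
      then have "1 \<le> Min (set_mset M)" using pos by (simp add: Suc_le_eq)
      moreover have "Min (set_mset M) \<le> n" using mem mem_le_sum s by metis
      ultimately show "M \<in> (\<Union>m\<in>{1..n+1}. Am m)" using M by (auto simp: Am_def)
    qed
  qed (auto simp: Am_def)
  have cardA: "card A = (\<Sum>m\<in>{1..n+1}. card (Am m))"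
    unfolding un
    by (rule card_UN_disjoint) (use finA in \<open>auto simp: Am_def\<close>)
  have cAm: "card (Am m) = (if 3*m \<le> n then Q m (n - 3*m) else 0)" if m1: "1 \<le> m" for m
  proof (cases "3*m \<le> n")
    case True
    have "bij_betw (\<lambda>M. M - replicate_mset 3 m) (Am m) (Qs m (n - 3*m))"
    proof (rule bij_betw_byWitness[where f'="\<lambda>N. N + replicate_mset 3 m"])
      show "\<forall>a\<in>Am m. a - replicate_mset 3 m + replicate_mset 3 m = a"
      proof
        fix a assume "a \<in> Am m"
        then have "count a m \<ge> 3" by (auto simp: Am_def A_def)
        then have "replicate_mset 3 m \<subseteq># a" by (simp add: count_le_replicate_mset_subset_eq)
        then show "a - replicate_mset 3 m + replicate_mset 3 m = a" by simp
      qed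
      show "\<forall>a'\<in>Qs m (n - 3 * m). a' + replicate_mset 3 m - replicate_mset 3 m = a'" by simp
      show "(\<lambda>M. M - replicate_mset 3 m) ` Am m \<subseteq> Qs m (n - 3 * m)"
      proof
        fix N assume "N \<in> (\<lambda>M. M - replicate_mset 3 m) ` Am m"
        then obtain M where M: "M \<in> Am m" "N = M - replicate_mset 3 m" by blast
        then have ne: "M \<noteq> {#}" and pos: "\<forall>x\<in>#M. 0 < x" and s: "sum_mset M = n"
          and c: "count M m \<ge> 3" and mn: "Min (set_mset M) = m"
          by (auto simp: Am_def A_def partitions_def)
        have "replicate_mset 3 m \<subseteq># M" using c by (simp add: count_le_replicate_mset_subset_eq)
        then have MN: "M = N + replicate_mset 3 m" using M(2) by simp
        have ge: "\<forall>x\<in>#M. m \<le> x" using mn by auto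
        show "N \<in> Qs m (n - 3 * m)"
          using MN s pos ge by (auto simp: Qs_def partitions_def)
      qed
      show "(\<lambda>N. N + replicate_mset 3 m) ` Qs m (n - 3 * m) \<subseteq> Am m"
      proof
        fix M assume "M \<in> (\<lambda>N. N + replicate_mset 3 m) ` Qs m (n - 3 * m)"
        then obtain N where N: "N \<in> Qs m (n - 3*m)" "M = N + replicate_mset 3 m" by blast
        have sm: "set_mset M = insert m (set_mset N)" using N(2) by auto
        have ge: "\<forall>x\<in>#N. m \<le> x" using N(1) by (auto simp: Qs_def)
        have mn: "Min (set_mset M) = m" unfolding sm
          by (rule Min_eqI) (use ge in auto)
        have "count M m \<ge> 3" using N(2) by simp
        moreover have "M \<in> partitions n" using N True m1
          by (auto simp: Qs_def partitions_def)
        ultimately show "M \<in> Am m" using mn N(2) by (auto simp: Am_def A_def)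
      qed
    qed
    then show ?thesis using True by (simp add: Q_def bij_betw_same_card)
  next
    case False
    have e: "Am m = {}"
    proof (rule ccontr)
      assume "Am m \<noteq> {}"
      then obtain M where M: "M \<in> Am m" by blast
      then have s: "sum_mset M = n" and c: "count M m \<ge> 3"
        by (auto simp: Am_def A_def partitions_def)
      have "replicate_mset 3 m \<subseteq># M" using c by (simp add: count_le_replicate_mset_subset_eq)
      then obtain R where "M = replicate_mset 3 m + R" by (metis subset_mset.le_iff_add)
      then have "sum_mset M \<ge> 3*m" by simp
      then show False using s False by simp
    qed
    show ?thesis unfolding e using False by simp
  qed
  have "a3 n = card A" by (simp add: a3_def A_def)
  also have "\<dots> = (\<Sum>m=1..n+1. if 3*m \<le> n then Q m (n - 3*m) else 0)"
    unfolding cardA by (rule sum.cong) (auto simp: cAm)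
  finally show ?thesis .
qed


definition T :: "nat \<Rightarrow> nat \<Rightarrow> nat \<Rightarrow> int" where
  "T k n m = (if k*m \<le> n then int (Q m (n - k*m)) else 0)"

definition S :: "nat \<Rightarrow> nat \<Rightarrow> nat \<Rightarrow> int" where
  "S k n N = (\<Sum>m=1..N. T k n m)"

lemma T_step: assumes "1 \<le> m"
  shows "T (Suc k) n m = T k n m - T k (n + k) (Suc m)"
proof (cases "k*m \<le> n")
  case True
  have r: "Q m (n - k*m) = Q (Suc m) (n - k*m) + (if m \<le> n - k*m then Q m (n - k*m - m) else 0)"
    using Q_rec[OF assms] .
  have e1: "(m \<le> n - k*m) = (Suc k * m \<le> n)" using True by auto
  have e2: "n - k*m - m = n - Suc k * m" by simp
  have e3: "n + k - k * Suc m = n - k*m" using True by simp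
  show ?thesis using True r unfolding T_def e1 e2 e3 by auto
next
  case False
  then show ?thesis by (auto simp: T_def)
qed

lemma S_step: "S (Suc k) n N = S k n N - S k (n + k) (Suc N) + int (p n)"
proof -
  have "S (Suc k) n N = (\<Sum>m=1..N. T k n m) - (\<Sum>m=1..N. T k (n + k) (Suc m))"
    unfolding S_def sum_subtractf[symmetric] by (rule sum.cong) (auto simp: T_step)
  also have "(\<Sum>m=1..N. T k (n + k) (Suc m)) = (\<Sum>m=2..Suc N. T k (n + k) m)"
    by (rule sum.reindex_bij_witness[where i="\<lambda>m. m - 1" and j=Suc]) auto
  also have "\<dots> = S k (n + k) (Suc N) - T k (n + k) 1"
    unfolding S_def by (simp add: sum.atLeast_Suc_atMost numeral_2_eq_2)
  also have "T k (n + k) 1 = int (p n)" by (simp add: T_def Q1)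
  finally show ?thesis unfolding S_def by simp
qed

lemma S1: assumes "n \<le> N" "1 \<le> n" shows "S 1 n N = int (p n)"
proof -
  have h: "T 1 n m = int (Q m n) - int (Q (Suc m) n)" if "1 \<le> m" for m
    using Q_rec[OF that, of n] by (auto simp: T_def)
  have "S 1 n N = (\<Sum>m=1..N. int (Q m n) - int (Q (Suc m) n))"
    unfolding S_def by (intro sum.cong refl) (use h in auto)
  also have "\<dots> = int (Q 1 n) - int (Q (Suc N) n)"
    using sum_Suc_diff[of 1 N "\<lambda>m. - int (Q m n)"] by simp
  also have "Q (Suc N) n = 0" using assms by (intro Q_big) auto
  finally show ?thesis by (simp add: Q1)
qed

lemma S2: assumes "n \<le> N" "1 \<le> n" shows "S 2 n N = 2 * int (p n) - int (p (n+1))"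
  using S_step[of 1 n N] S1[OF assms] S1[of "n+1" "Suc N"] assms
  by (simp add: numeral_2_eq_2)

theorem theorem1p4:
  fixes n :: nat
  assumes "n \<ge> 1"
  shows "int (a3 n) = 3 * int (p n) - int (p (n + 1)) - 2 * int (p (n + 2)) + int (p (n + 3))"
proof -
  have "int (a3 n) = S 3 n (n+1)"
    unfolding a3_sum S_def T_def of_nat_sum by (intro sum.cong refl) simp
  also have "\<dots> = S 2 n (n+1) - S 2 (n+2) (Suc (n+1)) + int (p n)"
    using S_step[of 2 n "n+1"] by (simp add: numeral_3_eq_3 numeral_2_eq_2)
  also have "\<dots> = 3 * int (p n) - int (p (n + 1)) - 2 * int (p (n + 2)) + int (p (n + 3))"
    using S2[of n "n+1"] S2[of "n+2" "Suc (n+1)"] assms by (simp add: numeral_3_eq_3)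
  finally show ?thesis .
qed

end
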